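(* Let $K$ be a simplicial complex, $X\cup Y=K_0$ a cover of its vertex set, $A:=X\cap Y$, and $P:=\{\sigma\in K\mid\sigma\subset X\text{ or }\sigma\subset Y\text{ or }\sigma\cap A\neq\emptyset\}$. Assume $\bigcap_{\sigma\in K_1\setminus P}\mathrm{St}(\sigma,A)\neq\emptyset$. Then the homotopy fibers of the inclusion $K_X\cup K_Y\subset K$ are connected.
   Context: A simplicial complex is a collection of finite nonempty subsets of a fixed set closed under taking nonempty subsets; $K_0$ is its vertex set and $K_1$ its set of 1-dimensional simplices (edges); $K_B$ is the subcomplex of simplices contained in $B$. $\mathrm{St}(\sigma,A):=\{\mu\subset A\mid 0<|\mu|<\infty,\ \mu\cup\sigma\in K\}$. Homotopical notions refer to geometric realizations. *)

theory Defs
  imports "HOL-Analysis.Analysis"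
begin

definition simplicial_complex :: "'v set set \<Rightarrow> bool" where
  "simplicial_complex K \<longleftrightarrow>
     (\<forall>\<sigma>\<in>K. finite \<sigma> \<and> \<sigma> \<noteq> {}) \<and>
     (\<forall>\<sigma>\<in>K. \<forall>\<tau>. \<tau> \<subseteq> \<sigma> \<and> \<tau> \<noteq> {} \<longrightarrow> \<tau> \<in> K)"

definition vertices :: "'v set set \<Rightarrow> 'v set" where
  "vertices K = {v. {v} \<in> K}"

definition edges :: "'v set set \<Rightarrow> 'v set set" where
  "edges K = {\<sigma>\<in>K. card \<sigma> = 2}"

definition full_subcomplex :: "'v set set \<Rightarrow> 'v set \<Rightarrow> 'v set set" where
  "full_subcomplex K B = {\<sigma>\<in>K. \<sigma> \<subseteq> B}"

definition St :: "'v set set \<Rightarrow> 'v set \<Rightarrow> 'v set \<Rightarrow> 'v set set" where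
  "St K \<sigma> A = {\<mu>. \<mu> \<subseteq> A \<and> finite \<mu> \<and> \<mu> \<noteq> {} \<and> \<mu> \<union> \<sigma> \<in> K}"

text \<open>Geometric realization: points are barycentric coordinate functions
'v \<Rightarrow> real supported on a simplex; each closed simplex carries the
Euclidean (product) topology and the realization carries the weak
(coherent) topology with respect to the closed simplices.\<close>
definition closed_simplex :: "'v set \<Rightarrow> ('v \<Rightarrow> real) set" where
  "closed_simplex \<sigma> =
     {\<alpha>. (\<forall>v. 0 \<le> \<alpha> v) \<and> (\<forall>v. v \<notin> \<sigma> \<longrightarrow> \<alpha> v = 0) \<and> (\<Sum>v\<in>\<sigma>. \<alpha> v) = 1}"

definition realization :: "'v set set \<Rightarrow> ('v \<Rightarrow> real) set" where
  "realization K = (\<Union>\<sigma>\<in>K. closed_simplex \<sigma>)"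

definition realization_top :: "'v set set \<Rightarrow> ('v \<Rightarrow> real) topology" where
  "realization_top K = topology (\<lambda>U. U \<subseteq> realization K \<and>
     (\<forall>\<sigma>\<in>K. openin (subtopology (powertop_real UNIV) (closed_simplex \<sigma>))
                    (U \<inter> closed_simplex \<sigma>)))"

text \<open>It is connected iff it is nonempty and path-connected in the
compact-open topology; by the exponential law for the locally compact
Hausdorff interval, a path between (z0,\<gamma>0) and (z1,\<gamma>1) is a path \<zeta> in S from
z0 to z1 together with a continuous H : [0,1]\<times>[0,1] \<rightarrow> T with
H(0,-)=\<gamma>0, H(1,-)=\<gamma>1, H(t,0)=f(\<zeta> t), H(t,1)=w.\<close>
definition hofiber :: "'a topology \<Rightarrow> 'b topology \<Rightarrow> ('a \<Rightarrow> 'b) \<Rightarrow> 'b \<Rightarrow> ('a \<times> (real \<Rightarrow> 'b)) set" where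
  "hofiber S T f w = {(z, \<gamma>). z \<in> topspace S \<and> pathin T \<gamma> \<and> \<gamma> 0 = f z \<and> \<gamma> 1 = w}"

definition hofiber_connected :: "'a topology \<Rightarrow> 'b topology \<Rightarrow> ('a \<Rightarrow> 'b) \<Rightarrow> 'b \<Rightarrow> bool" where
  "hofiber_connected S T f w \<longleftrightarrow>
     hofiber S T f w \<noteq> {} \<and>
     (\<forall>z0 \<gamma>0 z1 \<gamma>1. (z0, \<gamma>0) \<in> hofiber S T f w \<and> (z1, \<gamma>1) \<in> hofiber S T f w \<longrightarrow>
        (\<exists>\<zeta> H. pathin S \<zeta> \<and> \<zeta> 0 = z0 \<and> \<zeta> 1 = z1 \<and>
           continuous_map (prod_topology (top_of_set {0..1}) (top_of_set {0..1})) T H \<and>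
           (\<forall>s\<in>{0..1}. H (0, s) = \<gamma>0 s \<and> H (1, s) = \<gamma>1 s) \<and>
           (\<forall>t\<in>{0..1}. H (t, 0) = f (\<zeta> t) \<and> H (t, 1) = w)))"

end

theory Submission
  imports Defs
begin

lemma pt_eq: "powertop_real UNIV = (euclidean :: ('v \<Rightarrow> real) topology)"
  by (rule euclidean_product_topology)

definition rpred :: "'v set set \<Rightarrow> ('v \<Rightarrow> real) set \<Rightarrow> bool" where
  "rpred K U \<longleftrightarrow> U \<subseteq> realization K \<and>
     (\<forall>\<sigma>\<in>K. openin (top_of_set (closed_simplex \<sigma>)) (U \<inter> closed_simplex \<sigma>))"

lemma istop_rpred: fixes K :: "'v set set" shows "istopology (rpred K)"
  unfolding istopology_def rpred_def
proof (intro conjI allI impI)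
  fix S T :: "('v \<Rightarrow> real) set"
  assume a: "S \<subseteq> realization K \<and> (\<forall>\<sigma>\<in>K. openin (top_of_set (closed_simplex \<sigma>)) (S \<inter> closed_simplex \<sigma>))"
    and b: "T \<subseteq> realization K \<and> (\<forall>\<sigma>\<in>K. openin (top_of_set (closed_simplex \<sigma>)) (T \<inter> closed_simplex \<sigma>))"
  show "S \<inter> T \<subseteq> realization K" using a by auto
  show "\<forall>\<sigma>\<in>K. openin (top_of_set (closed_simplex \<sigma>)) (S \<inter> T \<inter> closed_simplex \<sigma>)"
  proof
    fix \<sigma> assume "\<sigma> \<in> K"
    then have "openin (top_of_set (closed_simplex \<sigma>)) ((S \<inter> closed_simplex \<sigma>) \<inter> (T \<inter> closed_simplex \<sigma>))"
      using a b by (metis openin_Int)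
    then show "openin (top_of_set (closed_simplex \<sigma>)) (S \<inter> T \<inter> closed_simplex \<sigma>)"
      by (metis Int_assoc Int_left_commute Int_absorb)
  qed
next
  fix KK :: "('v \<Rightarrow> real) set set"
  assume a: "\<forall>S\<in>KK. S \<subseteq> realization K \<and> (\<forall>\<sigma>\<in>K. openin (top_of_set (closed_simplex \<sigma>)) (S \<inter> closed_simplex \<sigma>))"
  show "\<Union>KK \<subseteq> realization K" using a by auto
  show "\<forall>\<sigma>\<in>K. openin (top_of_set (closed_simplex \<sigma>)) (\<Union>KK \<inter> closed_simplex \<sigma>)"
  proof
    fix \<sigma> assume "\<sigma> \<in> K"
    then have "openin (top_of_set (closed_simplex \<sigma>)) (\<Union>((\<lambda>S. S \<inter> closed_simplex \<sigma>) ` KK))"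
      using a by (intro openin_Union) auto
    moreover have "\<Union>((\<lambda>S. S \<inter> closed_simplex \<sigma>) ` KK) = \<Union>KK \<inter> closed_simplex \<sigma>" by auto
    ultimately show "openin (top_of_set (closed_simplex \<sigma>)) (\<Union>KK \<inter> closed_simplex \<sigma>)" by simp
  qed
qed

lemma openin_rt: "openin (realization_top K) U \<longleftrightarrow> rpred K U"
proof -
  have "realization_top K = topology (rpred K)"
    unfolding realization_top_def rpred_def pt_eq by simp
  then show ?thesis using topology_inverse'[OF istop_rpred[of K]] by simp
qed

lemma cs_sub_real: "\<sigma> \<in> K \<Longrightarrow> closed_simplex \<sigma> \<subseteq> realization K"
  unfolding realization_def by auto

lemma topspace_rt: "topspace (realization_top K) = realization K"
proof -
  have "openin (realization_top K) (realization K)"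
    unfolding openin_rt rpred_def
  proof (intro conjI ballI)
    fix \<sigma> assume "\<sigma> \<in> K"
    then have "realization K \<inter> closed_simplex \<sigma> = topspace (top_of_set (closed_simplex \<sigma>))"
      using cs_sub_real by auto
    then show "openin (top_of_set (closed_simplex \<sigma>)) (realization K \<inter> closed_simplex \<sigma>)"
      by (metis openin_topspace)
  qed auto
  moreover have "\<And>U. openin (realization_top K) U \<Longrightarrow> U \<subseteq> realization K"
    unfolding openin_rt rpred_def by auto
  ultimately show ?thesis
    by (metis openin_subset subset_antisym topspace_def Union_least mem_Collect_eq Sup_upper)
qed

lemma closedin_rt:
  "closedin (realization_top K) C \<longleftrightarrow> C \<subseteq> realization K \<and>
     (\<forall>\<sigma>\<in>K. closedin (top_of_set (closed_simplex \<sigma>)) (C \<inter> closed_simplex \<sigma>))"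
proof -
  have e: "(realization K - C) \<inter> closed_simplex \<sigma> = closed_simplex \<sigma> - (C \<inter> closed_simplex \<sigma>)"
    if "\<sigma> \<in> K" for \<sigma> using cs_sub_real[OF that] by auto
  have "closedin (realization_top K) C \<longleftrightarrow> C \<subseteq> realization K \<and> rpred K (realization K - C)"
    by (simp add: closedin_def topspace_rt openin_rt)
  also have "\<dots> \<longleftrightarrow> C \<subseteq> realization K \<and>
     (\<forall>\<sigma>\<in>K. closedin (top_of_set (closed_simplex \<sigma>)) (C \<inter> closed_simplex \<sigma>))"
    unfolding rpred_def using e
    by (auto simp: closedin_def)
  finally show ?thesis .
qed

lemma closed_cs: fixes \<tau> :: "'v set" shows "finite \<tau> \<Longrightarrow> closed (closed_simplex \<tau>)"
proof -
  assume "finite \<tau>"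
  have "closed_simplex \<tau> = (\<Inter>v. {\<alpha>::'v\<Rightarrow>real. 0 \<le> \<alpha> v}) \<inter> (\<Inter>v\<in>-\<tau>. {\<alpha>. \<alpha> v = 0}) \<inter> {\<alpha>. sum \<alpha> \<tau> = 1}"
    unfolding closed_simplex_def by auto
  moreover have "closed {\<alpha>::'v\<Rightarrow>real. 0 \<le> \<alpha> v}" for v
    by (intro closed_Collect_le continuous_intros) auto
  moreover have "closed {\<alpha>::'v\<Rightarrow>real. \<alpha> v = 0}" for v
    by (intro closed_Collect_eq continuous_intros) auto
  moreover have "closed {\<alpha>::'v\<Rightarrow>real. sum \<alpha> \<tau> = 1}"
    by (intro closed_Collect_eq continuous_intros continuous_on_sum) auto
  ultimately show ?thesis by (metis closed_INT closed_Int)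
qed

lemma id_rt_cont: "continuous_map (realization_top K) (euclidean :: ('v \<Rightarrow> real) topology) (\<lambda>x. x)"
  unfolding continuous_map_openin_preimage_eq
proof (intro conjI allI impI)
  show "(\<lambda>x. x) \<in> topspace (realization_top K) \<rightarrow> topspace euclidean" by simp
  fix V :: "('v \<Rightarrow> real) set" assume "openin euclidean V"
  then have oV: "open V" by simp
  have "topspace (realization_top K) \<inter> (\<lambda>x. x) -` V = {x \<in> topspace (realization_top K). x \<in> V}" by auto
  moreover have "openin (realization_top K) {x \<in> topspace (realization_top K). x \<in> V}"
    unfolding openin_rt rpred_def topspace_rt
  proof (intro conjI ballI)
    fix \<sigma> assume "\<sigma> \<in> K"
    then have "{x \<in> realization K. x \<in> V} \<inter> closed_simplex \<sigma> = closed_simplex \<sigma> \<inter> V"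
      using cs_sub_real by blast
    then show "openin (top_of_set (closed_simplex \<sigma>)) ({x \<in> realization K. x \<in> V} \<inter> closed_simplex \<sigma>)"
      using oV by (simp add: openin_open_Int)
  qed auto
  ultimately show "openin (realization_top K) (topspace (realization_top K) \<inter> (\<lambda>x. x) -` V)" by simp
qed

lemma rt_coord:
  fixes K :: "'v set set"
  assumes "continuous_map Z (realization_top K) f"
  shows "continuous_map Z euclideanreal (\<lambda>z. f z v)"
proof -
  have c1: "continuous_map Z (euclidean :: ('v \<Rightarrow> real) topology) f"
    using continuous_map_compose[OF assms id_rt_cont] by (simp add: o_def)
  have c2: "continuous_map (euclidean :: ('v \<Rightarrow> real) topology) euclideanreal (\<lambda>x. x v)"
    by simp
  from continuous_map_compose[OF c1 c2] show ?thesis by (simp add: o_def)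
qed

lemma weak_cont:
  fixes f :: "'a \<Rightarrow> 'v \<Rightarrow> real"
  assumes co: "\<And>v. continuous_map Z euclideanreal (\<lambda>z. f z v)"
    and F: "finite F" "F \<subseteq> K" "\<forall>\<tau>\<in>F. finite \<tau>"
    and im: "\<And>z. z \<in> topspace Z \<Longrightarrow> \<exists>\<tau>\<in>F. f z \<in> closed_simplex \<tau>"
  shows "continuous_map Z (realization_top K) f"
proof -
  have ce: "continuous_map Z (euclidean :: ('v \<Rightarrow> real) topology) f"
    using co unfolding pt_eq[symmetric] continuous_map_componentwise_UNIV by blast
  show ?thesis
    unfolding continuous_map_closedin
  proof (intro conjI allI impI)
    show "f \<in> topspace Z \<rightarrow> topspace (realization_top K)"
      using im F cs_sub_real unfolding topspace_rt by blast
    fix C assume C: "closedin (realization_top K) C"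
    have eq: "{x \<in> topspace Z. f x \<in> C} = (\<Union>\<tau>\<in>F. {x \<in> topspace Z. f x \<in> C \<inter> closed_simplex \<tau>})"
      using im by blast
    have "closedin Z {x \<in> topspace Z. f x \<in> C \<inter> closed_simplex \<tau>}" if "\<tau> \<in> F" for \<tau>
    proof -
      have "closedin (top_of_set (closed_simplex \<tau>)) (C \<inter> closed_simplex \<tau>)"
        using C that F unfolding closedin_rt by blast
      moreover have "closed (closed_simplex \<tau>)" using closed_cs that F by blast
      ultimately have "closed (C \<inter> closed_simplex \<tau>)" using closedin_closed_trans by blast
      then have "closedin euclidean (C \<inter> closed_simplex \<tau>)" by simp
      from closedin_continuous_map_preimage[OF ce this] show ?thesis .
    qed
    then show "closedin Z {x \<in> topspace Z. f x \<in> C}"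
      unfolding eq using F(1) by (intro closedin_Union) auto
  qed
qed

definition supp :: "('v \<Rightarrow> real) \<Rightarrow> 'v set" where
  "supp \<alpha> = {v. \<alpha> v \<noteq> 0}"

lemma cs_pos: "\<alpha> \<in> closed_simplex \<sigma> \<Longrightarrow> \<alpha> v \<noteq> 0 \<Longrightarrow> v \<in> \<sigma>"
  unfolding closed_simplex_def by auto

lemma cs_supp:
  assumes a: "\<alpha> \<in> closed_simplex \<sigma>" and f: "finite \<sigma>"
  shows "supp \<alpha> \<subseteq> \<sigma>" "supp \<alpha> \<noteq> {}" "\<alpha> \<in> closed_simplex (supp \<alpha>)"
proof -
  show s: "supp \<alpha> \<subseteq> \<sigma>" using a unfolding supp_def closed_simplex_def by auto
  have sum1: "sum \<alpha> \<sigma> = 1" using a unfolding closed_simplex_def by auto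
  have eq: "sum \<alpha> (supp \<alpha>) = sum \<alpha> \<sigma>"
    by (rule sum.mono_neutral_left[OF f s]) (auto simp: supp_def)
  show "supp \<alpha> \<noteq> {}"
  proof
    assume "supp \<alpha> = {}"
    then have "sum \<alpha> \<sigma> = 0" using eq by simp
    then show False using sum1 by simp
  qed
  show "\<alpha> \<in> closed_simplex (supp \<alpha>)"
    using a eq sum1 unfolding closed_simplex_def by (auto simp: supp_def)
qed

lemma sc_face: "simplicial_complex K \<Longrightarrow> \<sigma> \<in> K \<Longrightarrow> \<tau> \<subseteq> \<sigma> \<Longrightarrow> \<tau> \<noteq> {} \<Longrightarrow> \<tau> \<in> K"
  unfolding simplicial_complex_def by blast

lemma sc_finite: "simplicial_complex K \<Longrightarrow> \<sigma> \<in> K \<Longrightarrow> finite \<sigma>"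
  unfolding simplicial_complex_def by blast

lemma real_supp:
  assumes "simplicial_complex K" "\<alpha> \<in> realization K"
  shows "supp \<alpha> \<in> K" "\<alpha> \<in> closed_simplex (supp \<alpha>)"
proof -
  obtain \<sigma> where s: "\<sigma> \<in> K" "\<alpha> \<in> closed_simplex \<sigma>" using assms(2) unfolding realization_def by auto
  have f: "finite \<sigma>" using sc_finite[OF assms(1) s(1)] .
  show "supp \<alpha> \<in> K" using sc_face[OF assms(1) s(1) cs_supp(1)[OF s(2) f] cs_supp(2)[OF s(2) f]] .
  show "\<alpha> \<in> closed_simplex (supp \<alpha>)" using cs_supp(3)[OF s(2) f] .
qed

lemma t1_cs: "t1_space (top_of_set (S :: ('v \<Rightarrow> real) set))"
proof -
  have "Hausdorff_space (powertop_real (UNIV :: 'v set))"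
    unfolding Hausdorff_space_product_topology by simp
  then have "t1_space (euclidean :: ('v \<Rightarrow> real) topology)"
    unfolding pt_eq by (rule Hausdorff_imp_t1_space)
  then show ?thesis by (rule t1_space_subtopology)
qed


lemma compact_finite_supp:
  assumes sc: "simplicial_complex K" and cpt: "compactin (realization_top K) C"
  shows "finite (supp ` C)"
proof (rule ccontr)
  assume inf: "infinite (supp ` C)"
  have CR: "C \<subseteq> realization K" using compactin_subset_topspace[OF cpt] by (simp add: topspace_rt)
  define r where "r T = (SOME \<alpha>. \<alpha> \<in> C \<and> supp \<alpha> = T)" for T
  have r: "r T \<in> C \<and> supp (r T) = T" if "T \<in> supp ` C" for T
  proof -
    have "\<exists>\<alpha>. \<alpha> \<in> C \<and> supp \<alpha> = T" using that by blast
    then show ?thesis unfolding r_def by (rule someI_ex)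
  qed
  define D where "D = r ` (supp ` C)"
  have "inj_on r (supp ` C)" by (rule inj_onI) (metis r)
  then have infD: "infinite D" unfolding D_def using inf finite_imageD by blast
  have DC: "D \<subseteq> C" unfolding D_def using r by auto
  have sinj: "inj_on supp D"
  proof (rule inj_onI)
    fix x y assume "x \<in> D" "y \<in> D" "supp x = supp y"
    then obtain T1 T2 where "T1 \<in> supp ` C" "x = r T1" "T2 \<in> supp ` C" "y = r T2" unfolding D_def by blast
    then show "x = y" using r \<open>supp x = supp y\<close> by metis
  qed
  have cl: "closedin (realization_top K) D'" if "D' \<subseteq> D" for D'
    unfolding closedin_rt
  proof (intro conjI ballI)
    show "D' \<subseteq> realization K" using that DC CR by auto
    fix \<sigma> assume "\<sigma> \<in> K"
    then have f: "finite \<sigma>" using sc_finite[OF sc] by blast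
    have "supp ` (D' \<inter> closed_simplex \<sigma>) \<subseteq> Pow \<sigma>" using cs_supp(1)[OF _ f] by auto
    then have "finite (supp ` (D' \<inter> closed_simplex \<sigma>))" using f by (meson finite_Pow_iff finite_subset)
    moreover have "inj_on supp (D' \<inter> closed_simplex \<sigma>)" by (rule inj_on_subset[OF sinj]) (use that in blast)
    ultimately have "finite (D' \<inter> closed_simplex \<sigma>)" using finite_imageD by blast
    moreover have "t1_space (top_of_set (closed_simplex \<sigma>))" by (rule t1_cs)
    ultimately show "closedin (top_of_set (closed_simplex \<sigma>)) (D' \<inter> closed_simplex \<sigma>)"
      unfolding t1_space_closedin_finite by auto
  qed
  have cD: "compactin (realization_top K) D" using closed_compactin[OF cpt DC cl] by simp
  define Op where "Op p = realization K - (D - {p})" for p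
  have oO: "openin (realization_top K) (Op p)" if "p \<in> D" for p
  proof -
    have "closedin (realization_top K) (D - {p})" using cl by blast
    then have "openin (realization_top K) (topspace (realization_top K) - (D - {p}))" by (simp add: closedin_def)
    then show ?thesis by (simp add: Op_def topspace_rt)
  qed
  have cov: "D \<subseteq> \<Union>(Op ` D)" unfolding Op_def using DC CR by blast
  have op: "\<forall>x\<in>Op ` D. openin (realization_top K) x" using oO by blast
  have "\<exists>F. finite F \<and> F \<subseteq> Op ` D \<and> D \<subseteq> \<Union>F"
    using cD unfolding compactin_def
    apply (elim conjE allE[of _ "Op ` D"])
    using op cov by blast
  then obtain F where F: "finite F" "F \<subseteq> Op ` D" "D \<subseteq> \<Union>F" by blast
  obtain P where P: "P \<subseteq> D" "finite P" "F = Op ` P" using finite_subset_image[OF F(1,2)] by blast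
  have "D \<subseteq> P"
  proof
    fix d assume "d \<in> D"
    then obtain p where "p \<in> P" "d \<in> Op p" using F(3) P(3) by auto
    then show "d \<in> P" using \<open>d \<in> D\<close> unfolding Op_def by auto
  qed
  then show False using infD P(2) finite_subset by blast
qed

definition ind :: "'v \<Rightarrow> 'v \<Rightarrow> real" where
  "ind x = (\<lambda>w. if w = x then 1 else 0)"

definition tent :: "nat \<Rightarrow> nat \<Rightarrow> real \<Rightarrow> real" where
  "tent M j u = max 0 (1 - \<bar>real M * u - real j\<bar>)"

definition pl :: "nat \<Rightarrow> (nat \<Rightarrow> 'v) \<Rightarrow> real \<Rightarrow> 'v \<Rightarrow> real" where
  "pl M w u x = (\<Sum>j\<le>M. tent M j u * ind (w j) x)"

lemma pl_seg:
  assumes "j < M" "real j \<le> real M * u" "real M * u \<le> real j + 1"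
  shows "pl M w u = (\<lambda>x. (1 - (real M * u - real j)) * ind (w j) x + (real M * u - real j) * ind (w (Suc j)) x)"
proof
  fix x
  have z: "tent M k u = 0" if "k \<notin> {j, Suc j}" for k
  proof (cases "k < j")
    case True
    then have "real k + 1 \<le> real j" by linarith
    then show ?thesis unfolding tent_def using assms by auto
  next
    case False
    with that have "real j + 2 \<le> real k" by auto
    then show ?thesis unfolding tent_def using assms by auto
  qed
  have "pl M w u x = (\<Sum>k\<in>{j, Suc j}. tent M k u * ind (w k) x)"
    unfolding pl_def
    by (rule sum.mono_neutral_right) (use assms z in auto)
  also have "\<dots> = tent M j u * ind (w j) x + tent M (Suc j) u * ind (w (Suc j)) x" by simp
  also have "tent M j u = 1 - (real M * u - real j)" unfolding tent_def using assms by auto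
  also have "tent M (Suc j) u = real M * u - real j" unfolding tent_def using assms by auto
  finally show "pl M w u x = (1 - (real M * u - real j)) * ind (w j) x + (real M * u - real j) * ind (w (Suc j)) x" .
qed

lemma pl_cont [continuous_intros]:
  "continuous_on S g \<Longrightarrow> continuous_on S (\<lambda>z. pl M w (g z) x)"
  unfolding pl_def tent_def by (intro continuous_intros)

lemma seg_exists:
  assumes "0 < N" "0 \<le> u" "u \<le> 1"
  shows "\<exists>i<N. real i \<le> real N * u \<and> real N * u \<le> real i + 1"
proof (cases "u = 1")
  case True
  then show ?thesis using assms by (intro exI[of _ "N - 1"]) auto
next
  case False
  define i where "i = nat \<lfloor>real N * u\<rfloor>"
  have u0: "0 \<le> real N * u" using assms by simp
  have "real N * u < real N" using assms False by simp
  then have "i < N" unfolding i_def using u0 by (simp add: nat_less_iff floor_less_iff)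
  moreover have "real i \<le> real N * u" "real N * u \<le> real i + 1" unfolding i_def using u0 by linarith+
  ultimately show ?thesis by blast
qed

lemma cs_comb:
  assumes "\<alpha> \<in> closed_simplex \<tau>" "\<beta> \<in> closed_simplex \<tau>" "0 \<le> l" "l \<le> 1"
  shows "(\<lambda>x. (1 - l) * \<alpha> x + l * \<beta> x) \<in> closed_simplex \<tau>"
proof -
  have "(\<Sum>x\<in>\<tau>. (1 - l) * \<alpha> x + l * \<beta> x) = (1 - l) * sum \<alpha> \<tau> + l * sum \<beta> \<tau>"
    by (simp add: sum.distrib sum_distrib_left)
  then show ?thesis using assms unfolding closed_simplex_def by auto
qed

lemma ind_cs: "finite \<tau> \<Longrightarrow> x \<in> \<tau> \<Longrightarrow> ind x \<in> closed_simplex \<tau>"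
  unfolding closed_simplex_def ind_def by auto

lemma seg_cs: "finite \<tau> \<Longrightarrow> x \<in> \<tau> \<Longrightarrow> y \<in> \<tau> \<Longrightarrow> 0 \<le> l \<Longrightarrow> l \<le> 1 \<Longrightarrow>
   (\<lambda>z. (1 - l) * ind x z + l * ind y z) \<in> closed_simplex \<tau>"
  by (rule cs_comb) (auto intro: ind_cs)

lemma path_supp_finite:
  assumes sc: "simplicial_complex K" and p: "pathin (realization_top K) g"
  shows "finite (supp ` g ` {0..1})" "supp ` g ` {0..1} \<subseteq> K"
    "\<And>u. u \<in> {0..1} \<Longrightarrow> g u \<in> realization K"
proof -
  have cm: "continuous_map (top_of_set {0..1}) (realization_top K) g" using p unfolding pathin_def .
  have "compactin (top_of_set {0..1::real}) {0..1}" by (simp add: compactin_subtopology)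
  from image_compactin[OF this cm] show "finite (supp ` g ` {0..1})"
    by (rule compact_finite_supp[OF sc])
  show gR: "\<And>u. u \<in> {0..1} \<Longrightarrow> g u \<in> realization K"
    using cm unfolding continuous_map_def topspace_rt by auto
  show "supp ` g ` {0..1} \<subseteq> K" using gR real_supp[OF sc] by auto
qed

lemma path_coord:
  assumes "pathin (realization_top K) g"
  shows "continuous_on {0..1} (\<lambda>u. g u v)"
  using rt_coord[of "top_of_set {0..1}" K g v] assms unfolding pathin_def by simp

lemma core:
  fixes K :: "'v set set" and X Y :: "'v set" and a :: 'v
  assumes sc: "simplicial_complex K" and XY: "X \<union> Y = vertices K"
    and ha: "\<And>\<sigma>. \<sigma> \<in> edges K \<Longrightarrow> \<not> (\<sigma> \<subseteq> X \<or> \<sigma> \<subseteq> Y \<or> \<sigma> \<inter> (X \<inter> Y) \<noteq> {}) \<Longrightarrow>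
              a \<in> X \<inter> Y \<and> insert a \<sigma> \<in> K"
    and Ldef: "L = full_subcomplex K X \<union> full_subcomplex K Y"
    and p0: "pathin (realization_top K) \<gamma>0" and p1: "pathin (realization_top K) \<gamma>1"
    and e0: "\<gamma>0 0 = z0" "\<gamma>0 1 = w" and e1: "\<gamma>1 0 = z1" "\<gamma>1 1 = w"
    and z0: "z0 \<in> realization L" and z1: "z1 \<in> realization L"
  shows "\<exists>\<zeta> H. pathin (realization_top L) \<zeta> \<and> \<zeta> 0 = z0 \<and> \<zeta> 1 = z1 \<and>
           continuous_map (prod_topology (top_of_set {0..1}) (top_of_set {0..1})) (realization_top K) H \<and>
           (\<forall>s\<in>{0..1}. H (0, s) = \<gamma>0 s \<and> H (1, s) = \<gamma>1 s) \<and>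
           (\<forall>t\<in>{0..1}. H (t, 0) = id (\<zeta> t) \<and> H (t, 1) = w)"
proof -
  define \<delta> where "\<delta> u = (if u \<le> 1/2 then \<gamma>0 (2 * u) else \<gamma>1 (2 - 2 * u))" for u :: real
  have dc: "continuous_on {0..1} (\<lambda>u. \<delta> u v)" for v
  proof -
    have c0: "continuous_on {0..1} (\<lambda>u. \<gamma>0 u v)" using path_coord[OF p0] .
    have c1: "continuous_on {0..1} (\<lambda>u. \<gamma>1 u v)" using path_coord[OF p1] .
    have "continuous_on {u \<in> {0..1}. u \<le> 1/2} (\<lambda>u. \<gamma>0 (2 * u) v)"
      by (rule continuous_on_compose2[OF c0]) (auto intro!: continuous_intros)
    moreover have "continuous_on {u \<in> {0..1}. 1/2 \<le> u} (\<lambda>u. \<gamma>1 (2 - 2 * u) v)"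
      by (rule continuous_on_compose2[OF c1]) (auto intro!: continuous_intros)
    ultimately have "continuous_on {0..1} (\<lambda>u::real. if u \<le> 1/2 then \<gamma>0 (2 * u) v else \<gamma>1 (2 - 2 * u) v)"
    proof (rule continuous_on_cases_le[where h = "\<lambda>u. u"])
      show "continuous_on {0..1} (\<lambda>u::real. u)" by (intro continuous_intros)
      fix u :: real assume "u \<in> {0..1}" "u = 1/2"
      then have "2 * u = 1" "2 - 2 * u = 1" by auto
      then show "\<gamma>0 (2 * u) v = \<gamma>1 (2 - 2 * u) v" by (simp add: e0 e1)
    qed
    moreover have "(\<lambda>u. \<delta> u v) = (\<lambda>u::real. if u \<le> 1/2 then \<gamma>0 (2 * u) v else \<gamma>1 (2 - 2 * u) v)"
      unfolding \<delta>_def by auto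
    ultimately show ?thesis by metis
  qed
  define S where "S = supp ` \<gamma>0 ` {0..1} \<union> supp ` \<gamma>1 ` {0..1}"
  have Sfin: "finite S" and SK: "S \<subseteq> K"
    using path_supp_finite[OF sc p0] path_supp_finite[OF sc p1] unfolding S_def by auto
  have dS: "supp (\<delta> u) \<in> S" "\<delta> u \<in> closed_simplex (supp (\<delta> u))" "supp (\<delta> u) \<in> K" if "u \<in> {0..1}" for u
  proof -
    have "supp (\<delta> u) \<in> S \<and> \<delta> u \<in> realization K"
      using that path_supp_finite(3)[OF sc p0] path_supp_finite(3)[OF sc p1] unfolding \<delta>_def S_def by auto
    then show "supp (\<delta> u) \<in> S" "\<delta> u \<in> closed_simplex (supp (\<delta> u))" "supp (\<delta> u) \<in> K"
      using real_supp[OF sc] SK by auto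
  qed
  define \<G> where "\<G> = {Ub. open Ub \<and> (\<exists>v. \<forall>u\<in>({0..1} \<inter> Ub). \<delta> u v \<noteq> 0)}"
  have cov: "{0..1} \<subseteq> \<Union>\<G>"
  proof
    fix u0 :: real assume u0: "u0 \<in> {0..1}"
    have "supp (\<delta> u0) \<noteq> {}" using dS(3)[OF u0] sc unfolding simplicial_complex_def by blast
    then obtain v where v: "\<delta> u0 v \<noteq> 0" unfolding supp_def by auto
    have "openin (top_of_set {0..1}) {u \<in> topspace (top_of_set {0..1}). \<delta> u v \<in> -{0}}"
      by (rule openin_continuous_map_preimage[of _ euclideanreal]) (use dc in auto)
    then obtain Ub where O: "open Ub" "{u \<in> {0..1}. \<delta> u v \<in> -{0}} = {0..1} \<inter> Ub"
      unfolding openin_open by auto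
    then have "Ub \<in> \<G>" unfolding \<G>_def by auto
    moreover have "u0 \<in> Ub" using O(2) u0 v by auto
    ultimately show "u0 \<in> \<Union>\<G>" by auto
  qed
  obtain \<epsilon> where ep: "0 < \<epsilon>" "\<And>x. x \<in> {0..1} \<Longrightarrow> \<exists>G\<in>\<G>. ball x \<epsilon> \<subseteq> G"
    using Heine_Borel_lemma[OF compact_Icc cov] unfolding \<G>_def by blast
  obtain N :: nat where N: "1 / \<epsilon> < real N" using reals_Archimedean2 by blast
  have Npos: "0 < N" using N ep(1) by (metis divide_pos_pos of_nat_0 order.strict_trans zero_less_one not_gr_zero less_irrefl)
  have Neps: "1 / real N < \<epsilon>" using N ep(1) Npos by (simp add: divide_less_eq mult.commute)
  have vex: "\<exists>v. \<forall>u\<in>{0..1}. \<bar>u - real i / real N\<bar> < \<epsilon> \<longrightarrow> \<delta> u v \<noteq> 0" if "i \<le> N" for i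
  proof -
    have "real i / real N \<in> {0..1}" using that Npos by auto
    then obtain G where G: "G \<in> \<G>" "ball (real i / real N) \<epsilon> \<subseteq> G" using ep(2) by blast
    then obtain v where v: "\<forall>u\<in>({0..1} \<inter> G). \<delta> u v \<noteq> 0" unfolding \<G>_def by auto
    have "\<delta> u v \<noteq> 0" if "u \<in> {0..1}" "\<bar>u - real i / real N\<bar> < \<epsilon>" for u
    proof -
      have "u \<in> ball (real i / real N) \<epsilon>" using that by (simp add: dist_real_def abs_minus_commute)
      then show ?thesis using v G that by auto
    qed
    then show ?thesis by blast
  qed
  define vs where "vs i = (SOME v. \<forall>u\<in>{0..1}. \<bar>u - real i / real N\<bar> < \<epsilon> \<longrightarrow> \<delta> u v \<noteq> 0)" for i
  have vs: "\<forall>u\<in>{0..1}. \<bar>u - real i / real N\<bar> < \<epsilon> \<longrightarrow> \<delta> u (vs i) \<noteq> 0" if "i \<le> N" for i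
    unfolding vs_def by (rule someI_ex[OF vex[OF that]])
  have key: "\<delta> u (vs i) \<noteq> 0 \<and> \<delta> u (vs (Suc i)) \<noteq> 0"
    if "i < N" "u \<in> {0..1}" "real i \<le> real N * u" "real N * u \<le> real i + 1" for i u
  proof -
    have Np: "0 < real N" using Npos by simp
    have q1: "u - real i / real N = (real N * u - real i) / real N"
      "u - real (Suc i) / real N = (real N * u - real (Suc i)) / real N"
      using Np by (simp_all add: field_simps)
    have "\<bar>real N * u - real i\<bar> \<le> 1" "\<bar>real N * u - real (Suc i)\<bar> \<le> 1" using that by auto
    then have "\<bar>u - real i / real N\<bar> \<le> 1 / real N" "\<bar>u - real (Suc i) / real N\<bar> \<le> 1 / real N"
      unfolding q1 using Np by (simp_all add: divide_right_mono)
    then show ?thesis using vs[of i] vs[of "Suc i"] that Neps by auto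
  qed
  have vX: "v \<in> X \<union> Y" if "v \<in> supp (\<delta> u)" "u \<in> {0..1}" for u v
  proof -
    have "{v} \<in> K" using sc_face[OF sc dS(3)[OF that(2)], of "{v}"] that(1) by auto
    then show ?thesis using XY unfolding vertices_def by auto
  qed
  have vsupp: "vs i \<in> supp (\<delta> u)" "vs (Suc i) \<in> supp (\<delta> u)"
    if "i < N" "u \<in> {0..1}" "real i \<le> real N * u" "real N * u \<le> real i + 1" for i u
    using key[OF that] unfolding supp_def by auto
  have segi: "real i / real N \<in> {0..1} \<and> real i \<le> real N * (real i / real N) \<and> real N * (real i / real N) \<le> real i + 1"
    if "i < N" for i using that Npos by auto
  define bad where "bad i \<longleftrightarrow> {vs i, vs (Suc i)} \<in> edges K \<and>
     \<not> ({vs i, vs (Suc i)} \<subseteq> X \<or> {vs i, vs (Suc i)} \<subseteq> Y \<or> {vs i, vs (Suc i)} \<inter> (X \<inter> Y) \<noteq> {})" for i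
  define ws where "ws j = (if even j then vs (j div 2) else if bad (j div 2) then a else vs (j div 2))" for j
  define E where "E i = (if bad i then {a, vs i, vs (Suc i)} else {vs i, vs (Suc i)})" for i
  define e where "e = pl N vs"
  define e' where "e' = pl (2 * N) ws"
  have pairK: "{vs i, vs (Suc i)} \<in> K" and pairXY: "vs i \<in> X \<union> Y" "vs (Suc i) \<in> X \<union> Y" if "i < N" for i
  proof -
    have u: "real i / real N \<in> {0..1}" using segi[OF that] by blast
    have sub: "{vs i, vs (Suc i)} \<subseteq> supp (\<delta> (real i / real N))" using vsupp[OF that] segi[OF that] by blast
    show "{vs i, vs (Suc i)} \<in> K" using sc_face[OF sc dS(3)[OF u] sub] by simp
    show "vs i \<in> X \<union> Y" "vs (Suc i) \<in> X \<union> Y" using vX[OF _ u] sub by auto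
  qed
  have EK: "E i \<in> K" if "i < N" for i
  proof (cases "bad i")
    case True
    then have "a \<in> X \<inter> Y \<and> insert a {vs i, vs (Suc i)} \<in> K" using ha unfolding bad_def by blast
    then show ?thesis using True unfolding E_def by simp
  next
    case False
    then show ?thesis using pairK[OF that] unfolding E_def by simp
  qed
  have Efin: "finite (E i)" for i unfolding E_def by auto
  have ws_even: "ws (2 * i) = vs i" and ws_even2: "ws (Suc (Suc (2 * i))) = vs (Suc i)" for i
    unfolding ws_def by auto
  have ws_odd: "ws (Suc (2 * i)) = (if bad i then a else vs i)" for i
    unfolding ws_def by auto
  have wsE: "ws (Suc (2 * i)) \<in> E i" for i unfolding ws_odd E_def by auto
  define EL where "EL i = {{vs i, ws (Suc (2 * i))}, {ws (Suc (2 * i)), vs (Suc i)}}" for i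
  have ELL: "\<tau> \<in> L" if "i < N" "\<tau> \<in> EL i" for i \<tau>
  proof -
    have tE: "\<tau> \<subseteq> E i" using that(2) unfolding EL_def E_def ws_odd by auto
    have tK: "\<tau> \<in> K" using sc_face[OF sc EK[OF that(1)] tE] that(2) unfolding EL_def by auto
    have "\<tau> \<subseteq> X \<or> \<tau> \<subseteq> Y"
    proof (cases "bad i")
      case True
      then have "a \<in> X \<inter> Y" using ha unfolding bad_def by blast
      then show ?thesis using that(2) True pairXY[OF that(1)] unfolding EL_def ws_odd by auto
    next
      case False
      show ?thesis
      proof (cases "vs i = vs (Suc i)")
        case True
        then show ?thesis using that(2) False pairXY[OF that(1)] unfolding EL_def ws_odd by auto
      next
        case ne: False
        then have "{vs i, vs (Suc i)} \<in> edges K" using pairK[OF that(1)] unfolding edges_def by auto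
        then have "{vs i, vs (Suc i)} \<subseteq> X \<or> {vs i, vs (Suc i)} \<subseteq> Y \<or> {vs i, vs (Suc i)} \<inter> (X \<inter> Y) \<noteq> {}"
          using False unfolding bad_def by blast
        then have "{vs i, vs (Suc i)} \<subseteq> X \<or> {vs i, vs (Suc i)} \<subseteq> Y" using pairXY[OF that(1)] by blast
        then show ?thesis using that(2) False unfolding EL_def ws_odd by auto
      qed
    qed
    then show ?thesis using tK unfolding Ldef full_subcomplex_def by auto
  qed
  have e_gen: "e u \<in> closed_simplex \<tau>"
    if "i < N" "real i \<le> real N * u" "real N * u \<le> real i + 1" "finite \<tau>" "vs i \<in> \<tau>" "vs (Suc i) \<in> \<tau>" for i u \<tau>
  proof -
    have "e u = (\<lambda>x. (1 - (real N * u - real i)) * ind (vs i) x + (real N * u - real i) * ind (vs (Suc i)) x)"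
      unfolding e_def by (rule pl_seg[OF that(1-3)])
    moreover have "\<dots> \<in> closed_simplex \<tau>" using that by (intro seg_cs) auto
    ultimately show ?thesis by simp
  qed
  have e_seg: "e u \<in> closed_simplex (E i)"
    if "i < N" "real i \<le> real N * u" "real N * u \<le> real i + 1" for i u
    using e_gen[OF that Efin] by (auto simp: E_def)
  have e'_seg: "e' u \<in> closed_simplex (E i) \<and> (\<exists>\<tau>\<in>EL i. e' u \<in> closed_simplex \<tau>)"
    if "i < N" "real i \<le> real N * u" "real N * u \<le> real i + 1" for i u
  proof (cases "real (2 * N) * u \<le> real (2 * i) + 1")
    case True
    have eq: "e' u = (\<lambda>x. (1 - (real (2*N) * u - real (2*i))) * ind (ws (2*i)) x + (real (2*N) * u - real (2*i)) * ind (ws (Suc (2*i))) x)"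
      unfolding e'_def by (rule pl_seg) (use that True in auto)
    have l: "0 \<le> real (2*N) * u - real (2*i)" "real (2*N) * u - real (2*i) \<le> 1" using that True by auto
    have "e' u \<in> closed_simplex (E i)" unfolding eq ws_even
      using l wsE by (intro seg_cs[OF Efin]) (auto simp: E_def)
    moreover have "e' u \<in> closed_simplex {vs i, ws (Suc (2 * i))}" unfolding eq ws_even
      using l by (intro seg_cs) auto
    ultimately show ?thesis unfolding EL_def by blast
  next
    case False
    have eq: "e' u = (\<lambda>x. (1 - (real (2*N) * u - real (Suc (2*i)))) * ind (ws (Suc (2*i))) x + (real (2*N) * u - real (Suc (2*i))) * ind (ws (Suc (Suc (2*i)))) x)"
      unfolding e'_def by (rule pl_seg) (use that False in auto)
    have l: "0 \<le> real (2*N) * u - real (Suc (2*i))" "real (2*N) * u - real (Suc (2*i)) \<le> 1" using that False by auto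
    have "e' u \<in> closed_simplex (E i)" unfolding eq ws_even2
      using l wsE by (intro seg_cs[OF Efin]) (auto simp: E_def)
    moreover have "e' u \<in> closed_simplex {ws (Suc (2 * i)), vs (Suc i)}" unfolding eq ws_even2
      using l by (intro seg_cs) auto
    ultimately show ?thesis unfolding EL_def by blast
  qed
  define p where "p \<sigma> = min 1 (2 * \<sigma>)" for \<sigma> :: real
  define q where "q \<sigma> = max 0 (2 * \<sigma> - 1)" for \<sigma> :: real
  define G where "G \<sigma> u = (\<lambda>x. (1 - p \<sigma>) * \<delta> u x + (p \<sigma> - q \<sigma>) * e u x + q \<sigma> * e' u x)" for \<sigma> u
  have G_lo: "G \<sigma> u = (\<lambda>x. (1 - 2 * \<sigma>) * \<delta> u x + (2 * \<sigma>) * e u x)" if "0 \<le> \<sigma>" "\<sigma> \<le> 1/2" for \<sigma> u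
    using that unfolding G_def p_def q_def by auto
  have G_hi: "G \<sigma> u = (\<lambda>x. (1 - (2 * \<sigma> - 1)) * e u x + (2 * \<sigma> - 1) * e' u x)" if "1/2 \<le> \<sigma>" for \<sigma> u
    using that unfolding G_def p_def q_def by auto
  have G_0: "G 0 u = \<delta> u" for u unfolding G_def p_def q_def by simp
  have G_1: "G 1 u = e' u" for u unfolding G_def p_def q_def by simp
  define F where "F = S \<union> E ` {..<N}"
  have Ffin: "finite F" and FK: "F \<subseteq> K" using Sfin SK EK unfolding F_def by auto
  have GF: "\<exists>\<tau>\<in>F. G \<sigma> u \<in> closed_simplex \<tau>" if su: "\<sigma> \<in> {0..1}" "u \<in> {0..1}" for \<sigma> u
  proof -
    obtain i where i: "i < N" "real i \<le> real N * u" "real N * u \<le> real i + 1"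
      using seg_exists[OF Npos] su(2) by auto
    show ?thesis
    proof (cases "\<sigma> \<le> 1/2")
      case True
      have fin: "finite (supp (\<delta> u))" using sc_finite[OF sc dS(3)[OF su(2)]] .
      have "e u \<in> closed_simplex (supp (\<delta> u))"
        using e_gen[OF i fin] vsupp[OF i(1) su(2) i(2,3)] by auto
      moreover have "G \<sigma> u = (\<lambda>x. (1 - 2 * \<sigma>) * \<delta> u x + (2 * \<sigma>) * e u x)"
        using G_lo[of \<sigma> u] su True by auto
      ultimately have "G \<sigma> u \<in> closed_simplex (supp (\<delta> u))"
        using cs_comb[OF dS(2)[OF su(2)], of "e u" "2 * \<sigma>"] su True by auto
      then show ?thesis using dS(1)[OF su(2)] unfolding F_def by auto
    next
      case False
      have "G \<sigma> u = (\<lambda>x. (1 - (2 * \<sigma> - 1)) * e u x + (2 * \<sigma> - 1) * e' u x)"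
        using G_hi[of \<sigma> u] False by auto
      then have "G \<sigma> u \<in> closed_simplex (E i)"
        using cs_comb[OF e_seg[OF i], of "e' u" "2 * \<sigma> - 1"] e'_seg[OF i] su False by auto
      then show ?thesis using i(1) unfolding F_def by auto
    qed
  qed
  have e_0: "e 0 = ind (vs 0)" and e'_0: "e' 0 = ind (vs 0)"
  proof -
    have "e 0 = (\<lambda>x. (1 - (real N * 0 - real 0)) * ind (vs 0) x + (real N * 0 - real 0) * ind (vs (Suc 0)) x)"
      unfolding e_def by (rule pl_seg) (use Npos in auto)
    then show "e 0 = ind (vs 0)" by simp
    have "e' 0 = (\<lambda>x. (1 - (real (2*N) * 0 - real 0)) * ind (ws 0) x + (real (2*N) * 0 - real 0) * ind (ws (Suc 0)) x)"
      unfolding e'_def by (rule pl_seg) (use Npos in auto)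
    then show "e' 0 = ind (vs 0)" by (simp add: ws_def)
  qed
  have e_1: "e 1 = ind (vs N)" and e'_1: "e' 1 = ind (vs N)"
  proof -
    have "e 1 = (\<lambda>x. (1 - (real N * 1 - real (N - 1))) * ind (vs (N - 1)) x + (real N * 1 - real (N - 1)) * ind (vs (Suc (N - 1))) x)"
      unfolding e_def by (rule pl_seg) (use Npos in auto)
    then show "e 1 = ind (vs N)" using Npos by (simp add: of_nat_diff)
    have "e' 1 = (\<lambda>x. (1 - (real (2*N) * 1 - real (2*N - 1))) * ind (ws (2*N - 1)) x + (real (2*N) * 1 - real (2*N - 1)) * ind (ws (Suc (2*N - 1))) x)"
      unfolding e'_def by (rule pl_seg) (use Npos in auto)
    moreover have "Suc (2*N - 1) = 2 * N" using Npos by simp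
    ultimately show "e' 1 = ind (vs N)" using Npos by (simp add: of_nat_diff ws_def)
  qed
  have d0: "\<delta> 0 = z0" and d1: "\<delta> 1 = z1" and dh: "\<delta> (1/2) = w"
    unfolding \<delta>_def using e0 e1 by auto
  have zL: "supp z \<in> L" "z \<in> closed_simplex (supp z)" "finite (supp z)" if zR: "z \<in> realization L" for z
  proof -
    obtain \<tau> where t: "\<tau> \<in> L" "z \<in> closed_simplex \<tau>" using zR unfolding realization_def by auto
    have tK: "\<tau> \<in> K" and tXY: "\<tau> \<subseteq> X \<or> \<tau> \<subseteq> Y" using t(1) unfolding Ldef full_subcomplex_def by auto
    have f: "finite \<tau>" using sc_finite[OF sc tK] .
    have "supp z \<in> K" using sc_face[OF sc tK cs_supp(1)[OF t(2) f] cs_supp(2)[OF t(2) f]] .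
    then show "supp z \<in> L" using tXY cs_supp(1)[OF t(2) f] unfolding Ldef full_subcomplex_def by auto
    show "z \<in> closed_simplex (supp z)" using cs_supp(3)[OF t(2) f] .
    show "finite (supp z)" using f cs_supp(1)[OF t(2) f] finite_subset by blast
  qed
  have v0: "vs 0 \<in> supp z0" using vsupp(1)[of 0 0] Npos d0 by auto
  have vN: "vs N \<in> supp z1"
  proof -
    have "vs (Suc (N - 1)) \<in> supp (\<delta> 1)" using vsupp(2)[of "N - 1" 1] Npos by (auto simp: of_nat_diff)
    then show ?thesis using Npos d1 by simp
  qed
  have Gb0: "G \<sigma> 0 \<in> closed_simplex (supp z0)" if "\<sigma> \<in> {0..1}" for \<sigma>
  proof -
    have "G \<sigma> 0 = (\<lambda>x. (1 - p \<sigma>) * z0 x + p \<sigma> * ind (vs 0) x)"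
      unfolding G_def e_0 e'_0 d0 by (auto simp: algebra_simps)
    moreover have "0 \<le> p \<sigma>" "p \<sigma> \<le> 1" using that unfolding p_def by auto
    ultimately show ?thesis
      using cs_comb[OF zL(2)[OF z0] ind_cs[OF zL(3)[OF z0] v0]] by auto
  qed
  have Gb1: "G \<sigma> 1 \<in> closed_simplex (supp z1)" if "\<sigma> \<in> {0..1}" for \<sigma>
  proof -
    have "G \<sigma> 1 = (\<lambda>x. (1 - p \<sigma>) * z1 x + p \<sigma> * ind (vs N) x)"
      unfolding G_def e_1 e'_1 d1 by (auto simp: algebra_simps)
    moreover have "0 \<le> p \<sigma>" "p \<sigma> \<le> 1" using that unfolding p_def by auto
    ultimately show ?thesis
      using cs_comb[OF zL(2)[OF z1] ind_cs[OF zL(3)[OF z1] vN]] by auto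
  qed
  have Gcont: "continuous_on Z (\<lambda>z. G (f1 z) (f2 z) x)"
    if c1: "continuous_on Z f1" and c2: "continuous_on Z f2" and im: "f2 ` Z \<subseteq> {0..1}" for Z :: "'z::topological_space set" and f1 f2 x
  proof -
    have cd: "continuous_on Z (\<lambda>z. \<delta> (f2 z) x)"
      by (rule continuous_on_compose2[OF dc[of x] c2 im])
    have "continuous_on Z (\<lambda>z. (1 - p (f1 z)) * \<delta> (f2 z) x + (p (f1 z) - q (f1 z)) * e (f2 z) x + q (f1 z) * e' (f2 z) x)"
      unfolding p_def q_def e_def e'_def by (intro continuous_intros cd c1 c2)
    then show ?thesis unfolding G_def by simp
  qed
  define bs where "bs t = min 1 (min (3 * t) (3 - 3 * t))" for t :: real
  define bu where "bu t = max 0 (min 1 (3 * t - 1))" for t :: real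
  have bsc: "continuous_on A bs" and buc: "continuous_on A bu" for A
    unfolding bs_def bu_def by (intro continuous_intros)+
  have bsb: "bs t \<in> {0..1}" and bub: "bu t \<in> {0..1}" if "t \<in> {0..1}" for t
    using that unfolding bs_def bu_def by auto
  define \<zeta> where "\<zeta> t = G (bs t) (bu t)" for t
  define H where "H z = G ((1 - snd z) * bs (fst z)) ((1 - snd z) * bu (fst z) + snd z / 2)" for z :: "real \<times> real"
  have zpath: "pathin (realization_top L) \<zeta>"
    unfolding pathin_def
  proof (rule weak_cont)
    define FL where "FL = {supp z0, supp z1} \<union> \<Union>(EL ` {..<N})"
    show "finite FL" unfolding FL_def EL_def by auto
    show "FL \<subseteq> L" unfolding FL_def using zL(1)[OF z0] zL(1)[OF z1] ELL by auto
    show "\<forall>\<tau>\<in>FL. finite \<tau>" unfolding FL_def EL_def using zL(3)[OF z0] zL(3)[OF z1] by auto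
    fix x
    have "continuous_on {0..1} (\<lambda>t. \<zeta> t x)"
      unfolding \<zeta>_def by (rule Gcont[OF bsc buc]) (use bub in auto)
    then show "continuous_map (top_of_set {0..1}) euclideanreal (\<lambda>t. \<zeta> t x)" by simp
  next
    fix t assume "t \<in> topspace (top_of_set {0..1::real})"
    then have t: "t \<in> {0..1}" by simp
    define FL where "FL = {supp z0, supp z1} \<union> \<Union>(EL ` {..<N})"
    show "\<exists>\<tau>\<in>{supp z0, supp z1} \<union> \<Union>(EL ` {..<N}). \<zeta> t \<in> closed_simplex \<tau>"
    proof (cases "t \<le> 1/3")
      case True
      then have "bu t = 0" unfolding bu_def by auto
      then show ?thesis using Gb0[OF bsb[OF t]] unfolding \<zeta>_def by auto
    next
      case f1: False
      show ?thesis
      proof (cases "2/3 \<le> t")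
        case True
        then have "bu t = 1" unfolding bu_def by auto
        then show ?thesis using Gb1[OF bsb[OF t]] unfolding \<zeta>_def by auto
      next
        case False
        then have "bs t = 1" using f1 unfolding bs_def by auto
        then have ze: "\<zeta> t = e' (bu t)" unfolding \<zeta>_def using G_1 by simp
        obtain i where i: "i < N" "real i \<le> real N * bu t" "real N * bu t \<le> real i + 1"
          using seg_exists[OF Npos] bub[OF t] by auto
        then show ?thesis using e'_seg[OF i] ze by auto
      qed
    qed
  qed
  have arg2: "(1 - s) * bu t + s / 2 \<in> {0..1}" and arg1: "(1 - s) * bs t \<in> {0..1}"
    if "t \<in> {0..1}" "s \<in> {0..1}" for t s
  proof -
    have "bu t \<in> {0..1}" "bs t \<in> {0..1}" using bub bsb that(1) by auto
    moreover have "0 \<le> 1 - s" "1 - s \<le> 1" using that(2) by auto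
    ultimately have "(1 - s) * bu t \<le> 1 - s" "0 \<le> (1 - s) * bu t" "(1 - s) * bs t \<le> 1 - s" "0 \<le> (1 - s) * bs t"
      by (auto simp: mult_left_le)
    then show "(1 - s) * bu t + s / 2 \<in> {0..1}" "(1 - s) * bs t \<in> {0..1}" using that(2) by auto
  qed
  have Hcont: "continuous_map (prod_topology (top_of_set {0..1}) (top_of_set {0..1})) (realization_top K) H"
  proof (rule weak_cont[OF _ Ffin FK])
    show "\<forall>\<tau>\<in>F. finite \<tau>" using FK sc_finite[OF sc] by blast
    fix x
    have "continuous_on ({0..1} \<times> {0..1}) (\<lambda>z. H z x)"
      unfolding H_def
      by (rule Gcont) (auto intro!: continuous_intros continuous_on_compose2[OF bsc] continuous_on_compose2[OF buc] arg2)
    then show "continuous_map (prod_topology (top_of_set {0..1}) (top_of_set {0..1})) euclideanreal (\<lambda>z. H z x)"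
      by simp
  next
    fix z assume "z \<in> topspace (prod_topology (top_of_set {0..1::real}) (top_of_set {0..1::real}))"
    then have "fst z \<in> {0..1}" "snd z \<in> {0..1}" by auto
    then show "\<exists>\<tau>\<in>F. H z \<in> closed_simplex \<tau>" unfolding H_def by (intro GF arg1 arg2)
  qed
  have bs0: "bs 0 = 0" "bs 1 = 0" and bu0: "bu 0 = 0" "bu 1 = 1" unfolding bs_def bu_def by auto
  have Hl: "H (0, s) = \<gamma>0 s" if "s \<in> {0..1}" for s
  proof -
    have "H (0, s) = \<delta> (s / 2)" unfolding H_def using bs0 bu0 G_0 by simp
    then show ?thesis using that unfolding \<delta>_def by auto
  qed
  have Hr: "H (1, s) = \<gamma>1 s" if "s \<in> {0..1}" for s
  proof -
    have "H (1, s) = \<delta> ((1 - s) + s / 2)" unfolding H_def using bs0 bu0 G_0 by simp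
    moreover have "\<delta> ((1 - s) + s / 2) = \<gamma>1 s"
    proof (cases "s = 1")
      case True
      then show ?thesis unfolding \<delta>_def using e0 e1 by simp
    next
      case False
      then have "\<not> (1 - s) + s / 2 \<le> 1/2" "2 - 2 * ((1 - s) + s / 2) = s" using that by auto
      then show ?thesis unfolding \<delta>_def by simp
    qed
    ultimately show ?thesis by simp
  qed
  have Ht: "H (t, 1) = w" for t unfolding H_def using G_0 dh by simp
  have Hb: "H (t, 0) = id (\<zeta> t)" for t unfolding H_def \<zeta>_def by simp
  have z0e: "\<zeta> 0 = z0" and z1e: "\<zeta> 1 = z1" unfolding \<zeta>_def using bs0 bu0 G_0 d0 d1 by auto
  show ?thesis
    using zpath z0e z1e Hcont Hl Hr Ht Hb by blast
qed

theorem proposition8p1: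
  fixes K :: "'v set set" and X Y :: "'v set"
  assumes "simplicial_complex K"
    and "X \<union> Y = vertices K"
    and "(\<Inter>\<sigma>\<in>edges K - {\<sigma>\<in>K. \<sigma> \<subseteq> X \<or> \<sigma> \<subseteq> Y \<or> \<sigma> \<inter> (X \<inter> Y) \<noteq> {}}.
            St K \<sigma> (X \<inter> Y)) \<noteq> {}"
  shows "\<forall>w\<in>topspace (realization_top K).
           hofiber_connected (realization_top (full_subcomplex K X \<union> full_subcomplex K Y))
             (realization_top K) id w"
proof -
  note sc = assms(1)
  define L where "L = full_subcomplex K X \<union> full_subcomplex K Y"
  obtain a where ha: "\<And>\<sigma>. \<sigma> \<in> edges K \<Longrightarrow> \<not> (\<sigma> \<subseteq> X \<or> \<sigma> \<subseteq> Y \<or> \<sigma> \<inter> (X \<inter> Y) \<noteq> {}) \<Longrightarrow>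
              a \<in> X \<inter> Y \<and> insert a \<sigma> \<in> K"
  proof (cases "edges K - {\<sigma>\<in>K. \<sigma> \<subseteq> X \<or> \<sigma> \<subseteq> Y \<or> \<sigma> \<inter> (X \<inter> Y) \<noteq> {}} = {}")
    case True
    have "\<And>\<sigma>. \<sigma> \<in> edges K \<Longrightarrow> \<not> (\<sigma> \<subseteq> X \<or> \<sigma> \<subseteq> Y \<or> \<sigma> \<inter> (X \<inter> Y) \<noteq> {}) \<Longrightarrow> False"
      using True unfolding edges_def by blast
    then show ?thesis using that by blast
  next
    case False
    then obtain \<sigma>0 where s0: "\<sigma>0 \<in> edges K - {\<sigma>\<in>K. \<sigma> \<subseteq> X \<or> \<sigma> \<subseteq> Y \<or> \<sigma> \<inter> (X \<inter> Y) \<noteq> {}}" by blast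
    have "\<exists>\<mu>. \<mu> \<in> (\<Inter>\<sigma>\<in>edges K - {\<sigma>\<in>K. \<sigma> \<subseteq> X \<or> \<sigma> \<subseteq> Y \<or> \<sigma> \<inter> (X \<inter> Y) \<noteq> {}}.
            St K \<sigma> (X \<inter> Y))" by (subst ex_in_conv) (rule assms(3))
    then obtain \<mu> where mu: "\<mu> \<in> (\<Inter>\<sigma>\<in>edges K - {\<sigma>\<in>K. \<sigma> \<subseteq> X \<or> \<sigma> \<subseteq> Y \<or> \<sigma> \<inter> (X \<inter> Y) \<noteq> {}}.
            St K \<sigma> (X \<inter> Y))" by (rule exE)
    have "\<mu> \<in> St K \<sigma>0 (X \<inter> Y)" by (rule INT_D[OF mu s0])
    then obtain a where a: "a \<in> \<mu>" "\<mu> \<subseteq> X \<inter> Y" unfolding St_def by blast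
    show ?thesis
    proof (rule that)
      fix \<sigma> assume s: "\<sigma> \<in> edges K" "\<not> (\<sigma> \<subseteq> X \<or> \<sigma> \<subseteq> Y \<or> \<sigma> \<inter> (X \<inter> Y) \<noteq> {})"
      then have "\<sigma> \<in> edges K - {\<sigma>\<in>K. \<sigma> \<subseteq> X \<or> \<sigma> \<subseteq> Y \<or> \<sigma> \<inter> (X \<inter> Y) \<noteq> {}}" by blast
      then have "\<mu> \<in> St K \<sigma> (X \<inter> Y)" by (rule INT_D[OF mu])
      then have "\<mu> \<union> \<sigma> \<in> K" unfolding St_def by blast
      then have "insert a \<sigma> \<in> K" using sc_face[OF sc, of "\<mu> \<union> \<sigma>" "insert a \<sigma>"] a(1) by blast
      then show "a \<in> X \<inter> Y \<and> insert a \<sigma> \<in> K" using a by blast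
    qed
  qed
  show ?thesis
  proof
    fix w assume "w \<in> topspace (realization_top K)"
    then have wR: "w \<in> realization K" by (simp add: topspace_rt)
    have ne: "hofiber (realization_top L) (realization_top K) id w \<noteq> {}"
    proof -
      have sw: "supp w \<in> K" "w \<in> closed_simplex (supp w)" using real_supp[OF sc wR] by auto
      then have "supp w \<noteq> {}" using sc unfolding simplicial_complex_def by blast
      then obtain v where v: "v \<in> supp w" by blast
      have fw: "finite (supp w)" using sc_finite[OF sc sw(1)] .
      have vK: "{v} \<in> K" using sc_face[OF sc sw(1), of "{v}"] v by auto
      then have "v \<in> X \<union> Y" using assms(2) unfolding vertices_def by auto
      then have "{v} \<in> L" using vK unfolding L_def full_subcomplex_def by auto
      then have zR: "ind v \<in> realization L" unfolding realization_def using ind_cs[of "{v}" v] by auto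
      define g where "g s = (\<lambda>x. (1 - s) * ind v x + s * w x)" for s :: real
      have gp: "pathin (realization_top K) g"
        unfolding pathin_def
      proof (rule weak_cont[where F = "{supp w}"])
        fix x
        show "continuous_map (top_of_set {0..1}) euclideanreal (\<lambda>s. g s x)"
          unfolding g_def by (simp add: continuous_intros)
      next
        fix s assume "s \<in> topspace (top_of_set {0..1::real})"
        then have "0 \<le> s" "s \<le> 1" by auto
        then show "\<exists>\<tau>\<in>{supp w}. g s \<in> closed_simplex \<tau>"
          unfolding g_def using cs_comb[OF ind_cs[OF fw v] sw(2)] by auto
      qed (use sw fw in auto)
      have "g 0 = ind v" "g 1 = w" unfolding g_def by auto
      then have "(ind v, g) \<in> hofiber (realization_top L) (realization_top K) id w"
        unfolding hofiber_def using gp zR by (simp add: topspace_rt)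
      then show ?thesis by blast
    qed
    show "hofiber_connected (realization_top (full_subcomplex K X \<union> full_subcomplex K Y))
             (realization_top K) id w"
      unfolding L_def[symmetric] hofiber_connected_def
    proof (intro conjI allI impI)
      show "hofiber (realization_top L) (realization_top K) id w \<noteq> {}" by (rule ne)
      fix z0 \<gamma>0 z1 \<gamma>1
      assume "(z0, \<gamma>0) \<in> hofiber (realization_top L) (realization_top K) id w \<and>
              (z1, \<gamma>1) \<in> hofiber (realization_top L) (realization_top K) id w"
      then have h: "z0 \<in> realization L" "pathin (realization_top K) \<gamma>0" "\<gamma>0 0 = z0" "\<gamma>0 1 = w"
        "z1 \<in> realization L" "pathin (realization_top K) \<gamma>1" "\<gamma>1 0 = z1" "\<gamma>1 1 = w"
        unfolding hofiber_def by (auto simp: topspace_rt)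
      show "\<exists>\<zeta> H. pathin (realization_top L) \<zeta> \<and> \<zeta> 0 = z0 \<and> \<zeta> 1 = z1 \<and>
           continuous_map (prod_topology (top_of_set {0..1}) (top_of_set {0..1})) (realization_top K) H \<and>
           (\<forall>s\<in>{0..1}. H (0, s) = \<gamma>0 s \<and> H (1, s) = \<gamma>1 s) \<and>
           (\<forall>t\<in>{0..1}. H (t, 0) = id (\<zeta> t) \<and> H (t, 1) = w)"
        by (rule core[OF sc assms(2) ha L_def h(2) h(6) h(3) h(4) h(7) h(8) h(1) h(5)])
    qed
  qed
qed

end
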